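(* The categories $(\mathcal I_D)_{D}$, where $D$ ranges over all subsemigroups of $(\mathbb N_0,+)$, are pairwise distinct: if $D_1,D_2$ are subsemigroups of $(\mathbb N_0,+)$ with $\mathcal I_{D_1}=\mathcal I_{D_2}$, then $D_1=D_2$.
   Context: A (two-colored) partition $p$ consists of two finite totally ordered sets $U$ (upper row) and $L$ (lower row), a decomposition of the disjoint union $U\sqcup L$ (the points) into non-empty pairwise disjoint blocks, and a coloring of every point by $\circ$ or $\bullet$. A pair partition is one all of whose blocks have two points. Cyclic order and color sum: on the points of $p$ consider the cyclic order obtained by traversing the lower row from left to right, then the upper row from right to left, then returning to the leftmost lower point. For points $\alpha,\beta$, $]\alpha,\beta[$ denotes the points strictly after $\alpha$ and strictly before $\beta$ in this cyclic order, and $]\alpha,\beta]:=]\alpha,\beta[\cup\{\beta\}$ if $\alpha\neq\beta$, $]\alpha,\alpha]:=\emptyset$. The normalized color of a lower point is its color, that of an upper point the opposite color. For a set $S$ of points, $\sigma_p(S)$ is the number of normalized-$\circ$ points in $S$ minus the number of normalized-$\bullet$ points in $S$. Two distinct blocks $B,B'$ cross if there are $\alpha,\beta\in B$, $\gamma,\delta\in B'$ occurring in the cyclic order as $\alpha,\gamma,\beta,\delta$. $\mathcal P^{\circ\bullet}_{2,\mathrm{nb}}$: pair partitions each block of which contains one point of each normalized color. $\mathcal S_0$: those $p\in\mathcal P^{\circ\bullet}_{2,\mathrm{nb}}$ with $\sigma_p(]\alpha,\beta[)=0$ for every block $\{\alpha,\beta\}$. For $p\in\mathcal S_0$ and points $\alpha,\beta$: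 $\delta_p(\alpha,\beta)=\sigma_p(]\alpha,\beta[)$ if they have different normalized colors, $\sigma_p(]\alpha,\beta])$ otherwise; for blocks $B,B'$, $d_p(B,B'):=|\delta_p(\alpha,\alpha')|$ for any $\alpha\in B,\alpha'\in B'$ (independent of the choice). A subsemigroup of $(\mathbb N_0,+)$ is a (possibly empty) subset closed under addition. $\mathcal I_D$ is the set of all $p\in\mathcal S_0$ such that $d_p(B,B')\notin D$ for all pairs of crossing blocks $B,B'$ of $p$. *)

theory Defs
  imports Main
begin

text \<open>Points of a two-colored partition: the upper row is {Up 0, ..., Up (k-1)},
  the lower row is {Lo 0, ..., Lo (l-1)}, each ordered left to right by the index.
  (Every finite totally ordered set is order-isomorphic to such an initial segment.)\<close>

datatype pt = Up nat | Lo nat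

datatype colour = White | Black

record part =
  nup :: nat
  nlo :: nat
  col :: "pt \<Rightarrow> colour"
  blocks :: "pt set set"

definition points :: "part \<Rightarrow> pt set" where
  "points p = Up ` {..<nup p} \<union> Lo ` {..<nlo p}"

definition is_partition :: "part \<Rightarrow> bool" where
  "is_partition p \<longleftrightarrow>
     (\<forall>B\<in>blocks p. B \<noteq> {} \<and> B \<subseteq> points p) \<and>
     (\<forall>B\<in>blocks p. \<forall>B'\<in>blocks p. B \<noteq> B' \<longrightarrow> B \<inter> B' = {}) \<and>
     \<Union>(blocks p) = points p"

text \<open>Position in the cyclic order: lower row left to right, then upper row right to left.\<close>
fun pos :: "part \<Rightarrow> pt \<Rightarrow> nat" where
  "pos p (Lo j) = j"
| "pos p (Up i) = nlo p + (nup p - 1 - i)"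

definition cdist :: "part \<Rightarrow> pt \<Rightarrow> pt \<Rightarrow> nat" where
  "cdist p a b = (pos p b + (nup p + nlo p) - pos p a) mod (nup p + nlo p)"

definition open_int :: "part \<Rightarrow> pt \<Rightarrow> pt \<Rightarrow> pt set" where
  "open_int p a b = {c \<in> points p. 0 < cdist p a c \<and> cdist p a c < cdist p a b}"

definition halfopen_int :: "part \<Rightarrow> pt \<Rightarrow> pt \<Rightarrow> pt set" where
  "halfopen_int p a b = (if a = b then {} else open_int p a b \<union> {b})"

fun flip :: "colour \<Rightarrow> colour" where
  "flip White = Black" | "flip Black = White"

fun ncol :: "part \<Rightarrow> pt \<Rightarrow> colour" where
  "ncol p (Lo j) = col p (Lo j)"
| "ncol p (Up i) = flip (col p (Up i))"

definition csum :: "part \<Rightarrow> pt set \<Rightarrow> int" where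
  "csum p S = int (card {x\<in>S. ncol p x = White}) - int (card {x\<in>S. ncol p x = Black})"

definition crossing :: "part \<Rightarrow> pt set \<Rightarrow> pt set \<Rightarrow> bool" where
  "crossing p B B' \<longleftrightarrow> B \<noteq> B' \<and>
     (\<exists>a\<in>B. \<exists>b\<in>B. \<exists>c\<in>B'. \<exists>d\<in>B'.
        0 < cdist p a c \<and> cdist p a c < cdist p a b \<and> cdist p a b < cdist p a d)"

definition P2nb :: "part set" where
  "P2nb = {p. is_partition p \<and>
     (\<forall>B\<in>blocks p. \<exists>x y. B = {x, y} \<and> ncol p x = White \<and> ncol p y = Black)}"

definition S0 :: "part set" where
  "S0 = {p \<in> P2nb. \<forall>B\<in>blocks p. \<forall>a b. B = {a, b} \<and> a \<noteq> b \<longrightarrow> csum p (open_int p a b) = 0}"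

definition delta :: "part \<Rightarrow> pt \<Rightarrow> pt \<Rightarrow> int" where
  "delta p a b = (if ncol p a \<noteq> ncol p b then csum p (open_int p a b)
                  else csum p (halfopen_int p a b))"

definition dblk :: "part \<Rightarrow> pt set \<Rightarrow> pt set \<Rightarrow> nat" where
  "dblk p B B' = nat \<bar>delta p (SOME a. a \<in> B) (SOME a'. a' \<in> B')\<bar>"

definition subsemigroup :: "nat set \<Rightarrow> bool" where
  "subsemigroup D \<longleftrightarrow> (\<forall>x\<in>D. \<forall>y\<in>D. x + y \<in> D)"

definition I_D :: "nat set \<Rightarrow> part set" where
  "I_D D = {p \<in> S0. \<forall>B\<in>blocks p. \<forall>B'\<in>blocks p. crossing p B B' \<longrightarrow> dblk p B B' \<notin> D}"

end

theory Submission
  imports Defs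
begin


definition mkp :: "nat \<Rightarrow> (nat \<Rightarrow> bool) \<Rightarrow> (nat \<Rightarrow> nat) \<Rightarrow> part" where
 "mkp n c f = \<lparr>nup = 0, nlo = n,
    col = (\<lambda>x. case x of Lo j \<Rightarrow> (if c j then White else Black) | Up _ \<Rightarrow> White),
    blocks = (\<lambda>i. {Lo i, Lo (f i)}) ` {..<n}\<rparr>"

definition H :: "(nat \<Rightarrow> bool) \<Rightarrow> nat \<Rightarrow> int" where
 "H c i = (\<Sum>j<i. if c j then 1 else -1)"

definition lvl :: "(nat \<Rightarrow> bool) \<Rightarrow> nat \<Rightarrow> int" where
 "lvl c i = min (H c i) (H c (Suc i))"

definition good :: "nat \<Rightarrow> (nat \<Rightarrow> bool) \<Rightarrow> (nat \<Rightarrow> nat) \<Rightarrow> bool" where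
 "good n c f \<longleftrightarrow> (\<forall>i<n. f i < n \<and> f (f i) = i \<and> f i \<noteq> i \<and> c (f i) \<noteq> c i \<and> lvl c (f i) = lvl c i)
     \<and> H c n = 0"

lemma points_mkp: "points (mkp n c f) = Lo ` {..<n}"
  by (simp add: points_def mkp_def)

lemma ncol_mkp: "ncol (mkp n c f) (Lo j) = (if c j then White else Black)"
  by (simp add: mkp_def)

lemma col_mkp[simp]: "col (mkp n c f) (Lo j) = (if c j then White else Black)"
  by (simp add: mkp_def)

lemma cdist_mkp: "a < n \<Longrightarrow> b < n \<Longrightarrow>
   cdist (mkp n c f) (Lo a) (Lo b) = (if a \<le> b then b - a else b + n - a)"
proof -
  assume "a < n" "b < n"
  show ?thesis
  proof (cases "a \<le> b")
    case True
    then have "b + n - a = (b - a) + n" by simp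
    then have "(b + n - a) mod n = b - a" using \<open>b<n\<close>
      by (metis mod_add_self2 mod_less less_imp_diff_less)
    then show ?thesis using True by (simp add: cdist_def mkp_def)
  next
    case False
    then show ?thesis using \<open>a<n\<close> by (simp add: cdist_def mkp_def)
  qed
qed

lemma open_mkp: "a < n \<Longrightarrow> b < n \<Longrightarrow> open_int (mkp n c f) (Lo a) (Lo b) =
   Lo ` (if a < b then {a<..<b} else if b < a then {a<..<n} \<union> {..<b} else {})"
  apply (rule set_eqI)
  apply (auto simp: open_int_def points_mkp cdist_mkp image_iff split: if_splits)
  done

lemma csum_sum: "finite S \<Longrightarrow> csum p S = (\<Sum>x\<in>S. if ncol p x = White then 1 else -1)"
proof (induction S rule: finite_induct)
  case empty
  then show ?case by (simp add: csum_def)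
next
  case (insert x F)
  have e1: "{y \<in> insert x F. ncol p y = White} = (if ncol p x = White then insert x {y \<in> F. ncol p y = White} else {y \<in> F. ncol p y = White})" by auto
  have e2: "{y \<in> insert x F. ncol p y = Black} = (if ncol p x = Black then insert x {y \<in> F. ncol p y = Black} else {y \<in> F. ncol p y = Black})" by auto
  have "ncol p x = White \<or> ncol p x = Black" by (cases "ncol p x") auto
  then show ?case
  proof
    assume w: "ncol p x = White"
    then have "ncol p x \<noteq> Black" by auto
    then show ?thesis using insert w unfolding csum_def e1 e2 by simp
  next
    assume w: "ncol p x = Black"
    then have "ncol p x \<noteq> White" by auto
    then show ?thesis using insert w unfolding csum_def e1 e2 by simp
  qed
qed

lemma csum_Lo: "finite A \<Longrightarrow> csum (mkp n c f) (Lo ` A) = (\<Sum>j\<in>A. if c j then 1 else -1)"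
proof -
  assume "finite A"
  have "inj_on Lo A" by (simp add: inj_on_def)
  then show ?thesis using \<open>finite A\<close> by (auto simp: csum_sum sum.reindex mkp_def intro!: sum.cong)
qed

lemma H_diff: "a \<le> b \<Longrightarrow> H c b - H c a = (\<Sum>j\<in>{a..<b}. if c j then 1 else -1)"
  unfolding H_def
  using sum.atLeastLessThan_concat[of 0 a b "\<lambda>j. if c j then 1 else (-1::int)"]
  by (simp add: atLeast0LessThan)

lemma H_Suc: "H c (Suc i) = H c i + (if c i then 1 else -1)"
  by (simp add: H_def)

definition oset :: "nat \<Rightarrow> nat \<Rightarrow> nat \<Rightarrow> nat set" where
  "oset n a b = (if a < b then {a<..<b} else if b < a then {a<..<n} \<union> {..<b} else {})"

lemma oset_sum: "a < n \<Longrightarrow> b < n \<Longrightarrow> a \<noteq> b \<Longrightarrow> H c n = 0 \<Longrightarrow>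
   (\<Sum>j\<in>oset n a b. if c j then 1 else -1) = H c b - H c (Suc a)"
proof -
  assume h: "a < n" "b < n" "a \<noteq> b" "H c n = 0"
  show ?thesis
  proof (cases "a < b")
    case True
    have "{a<..<b} = {Suc a..<b}" by auto
    then show ?thesis using True H_diff[of "Suc a" b c] by (simp add: oset_def)
  next
    case False
    then have ba: "b < a" using h by auto
    have "{a<..<n} = {Suc a..<n}" by auto
    moreover have "(\<Sum>j\<in>{a<..<n} \<union> {..<b}. if c j then 1 else (-1::int)) =
       (\<Sum>j\<in>{a<..<n}. if c j then 1 else -1) + (\<Sum>j\<in>{..<b}. if c j then 1 else -1)"
      by (rule sum.union_disjoint) (use ba in auto)
    ultimately show ?thesis using ba h H_diff[of "Suc a" n c] by (simp add: oset_def H_def)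
  qed
qed

lemma open_mkp': "a < n \<Longrightarrow> b < n \<Longrightarrow> open_int (mkp n c f) (Lo a) (Lo b) = Lo ` oset n a b"
  unfolding oset_def by (rule open_mkp)

lemma b_notin_oset: "b \<notin> oset n a b"
  by (auto simp: oset_def)

lemma finite_oset: "finite (oset n a b)"
  by (auto simp: oset_def)

lemma delta_mkp: "H c n = 0 \<Longrightarrow> a < n \<Longrightarrow> b < n \<Longrightarrow>
   delta (mkp n c f) (Lo a) (Lo b) = lvl c b - lvl c a"
proof -
  assume h: "H c n = 0" "a < n" "b < n"
  show ?thesis
  proof (cases "a = b")
    case True
    then show ?thesis by (simp add: delta_def halfopen_int_def csum_def)
  next
    case False
    have ho: "halfopen_int (mkp n c f) (Lo a) (Lo b) = Lo ` insert b (oset n a b)"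
      using False h by (simp add: halfopen_int_def open_mkp')
    have s1: "csum (mkp n c f) (open_int (mkp n c f) (Lo a) (Lo b)) = H c b - H c (Suc a)"
      using h False by (simp add: open_mkp' csum_Lo finite_oset oset_sum)
    have s2: "csum (mkp n c f) (halfopen_int (mkp n c f) (Lo a) (Lo b)) = H c (Suc b) - H c (Suc a)"
    proof -
      have "csum (mkp n c f) (Lo ` insert b (oset n a b)) = (\<Sum>j\<in>insert b (oset n a b). if c j then 1 else -1)"
        by (rule csum_Lo) (simp add: finite_oset)
      also have "\<dots> = (if c b then 1 else -1) + (\<Sum>j\<in>oset n a b. if c j then 1 else -1)"
        by (simp add: finite_oset b_notin_oset)
      finally show ?thesis using h False by (simp add: ho oset_sum H_Suc)
    qed
    show ?thesis
      unfolding delta_def s1 s2 by (simp add: mkp_def lvl_def H_Suc)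
  qed
qed


definition cyc :: "nat \<Rightarrow> nat \<Rightarrow> nat \<Rightarrow> nat \<Rightarrow> bool" where
  "cyc a x b y \<longleftrightarrow> (a<x \<and> x<b \<and> b<y) \<or> (x<b \<and> b<y \<and> y<a) \<or> (b<y \<and> y<a \<and> a<x) \<or> (y<a \<and> a<x \<and> x<b)"

lemma blocks_mkp: "blocks (mkp n c f) = (\<lambda>i. {Lo i, Lo (f i)}) ` {..<n}"
  by (simp add: mkp_def)

lemma good_partition: "good n c f \<Longrightarrow> is_partition (mkp n c f)"
proof -
  assume g: "good n c f"
  have d: "{Lo i, Lo (f i)} \<inter> {Lo j, Lo (f j)} = {}" if "i < n" "j < n" "{Lo i, Lo (f i)} \<noteq> {Lo j, Lo (f j)}" for i j
  proof -
    have "f (f i) = i" "f (f j) = j" using g that by (auto simp: good_def)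
    then show ?thesis using that by auto
  qed
  have u: "\<Union>((\<lambda>i. {Lo i, Lo (f i)}) ` {..<n}) = Lo ` {..<n}"
    using g by (auto simp: good_def)
  show ?thesis
    unfolding is_partition_def blocks_mkp points_mkp u using g d by (auto simp: good_def)
qed

lemma good_P2nb: "good n c f \<Longrightarrow> mkp n c f \<in> P2nb"
proof -
  assume g: "good n c f"
  have "\<exists>x y. {Lo i, Lo (f i)} = {x, y} \<and> ncol (mkp n c f) x = White \<and> ncol (mkp n c f) y = Black"
    if "i < n" for i
  proof (cases "c i")
    case True
    then have "\<not> c (f i)" using g that by (auto simp: good_def)
    then have "ncol (mkp n c f) (Lo i) = White \<and> ncol (mkp n c f) (Lo (f i)) = Black"
      using True by (simp add: ncol_mkp)
    then show ?thesis by blast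
  next
    case False
    then have "c (f i)" using g that by (auto simp: good_def)
    then have "ncol (mkp n c f) (Lo (f i)) = White \<and> ncol (mkp n c f) (Lo i) = Black"
      using False by (simp add: ncol_mkp)
    then show ?thesis by (metis insert_commute)
  qed
  then show ?thesis using good_partition[OF g] by (auto simp: P2nb_def blocks_mkp)
qed

lemma good_S0: "good n c f \<Longrightarrow> mkp n c f \<in> S0"
proof -
  assume g: "good n c f"
  have key: "csum (mkp n c f) (open_int (mkp n c f) (Lo a) (Lo b)) = 0"
    if "a < n" "b < n" "c a \<noteq> c b" "lvl c a = lvl c b" "H c n = 0" for a b
  proof -
    have "delta (mkp n c f) (Lo a) (Lo b) = 0" using that by (simp add: delta_mkp)
    moreover have "ncol (mkp n c f) (Lo a) \<noteq> ncol (mkp n c f) (Lo b)" using that by simp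
    ultimately show ?thesis by (simp add: delta_def)
  qed
  have that: "csum (mkp n c f) (open_int (mkp n c f) a b) = 0"
    if "i < n" "{Lo i, Lo (f i)} = {a, b}" "a \<noteq> b" for i a b
  proof -
    have fi: "f i < n" "c (f i) \<noteq> c i" "lvl c (f i) = lvl c i" "H c n = 0" using g that(1) by (auto simp: good_def)
    have "(a = Lo i \<and> b = Lo (f i)) \<or> (a = Lo (f i) \<and> b = Lo i)" using that(2) by (simp add: doubleton_eq_iff) blast
    then show ?thesis
    proof
      assume "a = Lo i \<and> b = Lo (f i)"
      then show ?thesis using key[of i "f i"] fi that(1) by simp
    next
      assume "a = Lo (f i) \<and> b = Lo i"
      then show ?thesis using key[of "f i" i] fi that(1) by simp
    qed
  qed
  have "\<forall>B\<in>blocks (mkp n c f). \<forall>a b. B = {a, b} \<and> a \<noteq> b \<longrightarrow> csum (mkp n c f) (open_int (mkp n c f) a b) = 0"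
  proof (intro ballI allI impI)
    fix B a b assume "B \<in> blocks (mkp n c f)" "B = {a, b} \<and> a \<noteq> b"
    then obtain i where "i < n" "B = {Lo i, Lo (f i)}" unfolding blocks_mkp by auto
    then show "csum (mkp n c f) (open_int (mkp n c f) a b) = 0" using that \<open>B = {a, b} \<and> a \<noteq> b\<close> by auto
  qed
  then show ?thesis using good_P2nb[OF g] unfolding S0_def by (simp only: mem_Collect_eq)
qed

lemma good_dblk: "good n c f \<Longrightarrow> i < n \<Longrightarrow> j < n \<Longrightarrow>
   dblk (mkp n c f) {Lo i, Lo (f i)} {Lo j, Lo (f j)} = nat \<bar>lvl c j - lvl c i\<bar>"
proof -
  assume g: "good n c f" and ij: "i < n" "j < n"
  have fi: "f i < n" "f j < n" "lvl c (f i) = lvl c i" "lvl c (f j) = lvl c j" "H c n = 0"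
    using g ij by (auto simp: good_def)
  have "(SOME a. a \<in> {Lo i, Lo (f i)}) \<in> {Lo i, Lo (f i)}" by (rule someI[of _ "Lo i"]) simp
  then obtain x where x: "x \<in> {i, f i}" "(SOME a. a \<in> {Lo i, Lo (f i)}) = Lo x" by blast
  have "(SOME a. a \<in> {Lo j, Lo (f j)}) \<in> {Lo j, Lo (f j)}" by (rule someI[of _ "Lo j"]) simp
  then obtain y where y: "y \<in> {j, f j}" "(SOME a. a \<in> {Lo j, Lo (f j)}) = Lo y" by blast
  have "x < n" "lvl c x = lvl c i" using x(1) fi ij by auto
  moreover have "y < n" "lvl c y = lvl c j" using y(1) fi ij by auto
  ultimately have "delta (mkp n c f) (Lo x) (Lo y) = lvl c j - lvl c i" using fi(5) by (simp add: delta_mkp)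
  then show ?thesis unfolding dblk_def x(2) y(2) by simp
qed

lemma crossing_cyc: "good n c f \<Longrightarrow> i < n \<Longrightarrow> j < n \<Longrightarrow>
   crossing (mkp n c f) {Lo i, Lo (f i)} {Lo j, Lo (f j)} \<Longrightarrow>
   (\<exists>a\<in>{i, f i}. \<exists>b\<in>{i, f i}. \<exists>x\<in>{j, f j}. \<exists>y\<in>{j, f j}. cyc a x b y)"
proof -
  assume g: "good n c f" and ij: "i < n" "j < n" and cr: "crossing (mkp n c f) {Lo i, Lo (f i)} {Lo j, Lo (f j)}"
  have fi: "f i < n" "f j < n" using g ij by (auto simp: good_def)
  have cy: "cyc a x b y" if "a < n" "b < n" "x < n" "y < n"
     "0 < cdist (mkp n c f) (Lo a) (Lo x)" "cdist (mkp n c f) (Lo a) (Lo x) < cdist (mkp n c f) (Lo a) (Lo b)"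
     "cdist (mkp n c f) (Lo a) (Lo b) < cdist (mkp n c f) (Lo a) (Lo y)" for a b x y
    using that unfolding cdist_mkp[OF that(1) that(3)] cdist_mkp[OF that(1) that(2)] cdist_mkp[OF that(1) that(4)] cyc_def
    by (cases "a \<le> x"; cases "a \<le> b"; cases "a \<le> y"; simp; arith)
  from cr obtain a b x y where abxy: "a \<in> {i, f i}" "b \<in> {i, f i}" "x \<in> {j, f j}" "y \<in> {j, f j}"
    "0 < cdist (mkp n c f) (Lo a) (Lo x)" "cdist (mkp n c f) (Lo a) (Lo x) < cdist (mkp n c f) (Lo a) (Lo b)"
    "cdist (mkp n c f) (Lo a) (Lo b) < cdist (mkp n c f) (Lo a) (Lo y)"
    unfolding crossing_def by auto
  moreover have "a < n" "b < n" "x < n" "y < n" using abxy(1-4) ij fi by auto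
  ultimately show ?thesis using cy by blast
qed

lemma cyc_crossing: "good n c f \<Longrightarrow> i < n \<Longrightarrow> j < n \<Longrightarrow> cyc i j (f i) (f j) \<Longrightarrow>
   crossing (mkp n c f) {Lo i, Lo (f i)} {Lo j, Lo (f j)}"
proof -
  assume g: "good n c f" and ij: "i < n" "j < n" and cy: "cyc i j (f i) (f j)"
  have fi: "f i < n" "f j < n" using g ij by (auto simp: good_def)
  have "j \<noteq> i" "j \<noteq> f i" using cy unfolding cyc_def by linarith+
  then have ne: "{Lo i, Lo (f i)} \<noteq> {Lo j, Lo (f j)}" by (metis insertCI insertE pt.inject(2) empty_iff)
  have "0 < cdist (mkp n c f) (Lo i) (Lo j) \<and> cdist (mkp n c f) (Lo i) (Lo j) < cdist (mkp n c f) (Lo i) (Lo (f i))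
     \<and> cdist (mkp n c f) (Lo i) (Lo (f i)) < cdist (mkp n c f) (Lo i) (Lo (f j))"
    using cy unfolding cyc_def
  proof (elim disjE)
    assume "i < j \<and> j < f i \<and> f i < f j" then show ?thesis using ij fi by (simp add: cdist_mkp) arith
  next
    assume "j < f i \<and> f i < f j \<and> f j < i" then show ?thesis using ij fi by (simp add: cdist_mkp) arith
  next
    assume "f i < f j \<and> f j < i \<and> i < j" then show ?thesis using ij fi by (simp add: cdist_mkp) arith
  next
    assume "f j < i \<and> i < j \<and> j < f i" then show ?thesis using ij fi by (simp add: cdist_mkp) arith
  qed
  then show ?thesis using ne unfolding crossing_def by blast
qed

lemma good_ID: "good n c f \<Longrightarrow>
   (\<forall>i<n. \<forall>j<n. (\<exists>a\<in>{i, f i}. \<exists>b\<in>{i, f i}. \<exists>x\<in>{j, f j}. \<exists>y\<in>{j, f j}. cyc a x b y)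
        \<longrightarrow> nat \<bar>lvl c j - lvl c i\<bar> \<notin> D) \<Longrightarrow> mkp n c f \<in> I_D D"
proof -
  assume g: "good n c f" and h: "\<forall>i<n. \<forall>j<n. (\<exists>a\<in>{i, f i}. \<exists>b\<in>{i, f i}. \<exists>x\<in>{j, f j}. \<exists>y\<in>{j, f j}. cyc a x b y)
        \<longrightarrow> nat \<bar>lvl c j - lvl c i\<bar> \<notin> D"
  have "\<forall>B\<in>blocks (mkp n c f). \<forall>B'\<in>blocks (mkp n c f). crossing (mkp n c f) B B' \<longrightarrow> dblk (mkp n c f) B B' \<notin> D"
  proof (intro ballI impI)
    fix B B' assume B: "B \<in> blocks (mkp n c f)" "B' \<in> blocks (mkp n c f)" and cr: "crossing (mkp n c f) B B'"
    obtain i where i: "i < n" "B = {Lo i, Lo (f i)}" using B(1) unfolding blocks_mkp by auto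
    obtain j where j: "j < n" "B' = {Lo j, Lo (f j)}" using B(2) unfolding blocks_mkp by auto
    have "\<exists>a\<in>{i, f i}. \<exists>b\<in>{i, f i}. \<exists>x\<in>{j, f j}. \<exists>y\<in>{j, f j}. cyc a x b y"
      using crossing_cyc[OF g i(1) j(1)] cr i j by simp
    then have "nat \<bar>lvl c j - lvl c i\<bar> \<notin> D" using h i(1) j(1) by blast
    then show "dblk (mkp n c f) B B' \<notin> D" using good_dblk[OF g i(1) j(1)] i j by simp
  qed
  then show ?thesis using good_S0[OF g] unfolding I_D_def by (simp only: mem_Collect_eq)
qed



definition lev :: "nat \<Rightarrow> nat \<Rightarrow> nat" where
  "lev m i = (if i < m then i else if i < 2*m then 2*m-1-i else if i < 3*m then i-2*m else 4*m-1-i)"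

definition F :: "nat \<Rightarrow> (nat \<Rightarrow> bool) \<Rightarrow> nat \<Rightarrow> nat" where
  "F m T i = (if T (lev m i) then (if i < 2*m then 2*m-1-i else 6*m-1-i) else 4*m-1-i)"

lemma chords:
  assumes "i < 4*m"
  obtains (X1) k p q where "k < m" "lev m i = k" "{i, F m T i} = {p, q}" "T k" "p = k" "q + k + 1 = 2*m"
  | (X2) k p q where "k < m" "lev m i = k" "{i, F m T i} = {p, q}" "T k" "p = 2*m+k" "q + k + 1 = 4*m"
  | (Y1) k p q where "k < m" "lev m i = k" "{i, F m T i} = {p, q}" "\<not> T k" "p = k" "q + k + 1 = 4*m"
  | (Y2) k p q where "k < m" "lev m i = k" "{i, F m T i} = {p, q}" "\<not> T k" "p + k + 1 = 2*m" "q = 2*m+k"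
proof -
  consider "i < m" | "m \<le> i" "i < 2*m" | "2*m \<le> i" "i < 3*m" | "3*m \<le> i" using assms by linarith
  then show ?thesis
  proof cases
    case 1
    then have l: "lev m i = i" by (simp add: lev_def)
    show ?thesis
    proof (cases "T i")
      case True
      then have "F m T i = 2*m-1-i" using 1 l by (simp add: F_def)
      then show ?thesis using X1[of i i "2*m-1-i"] 1 l True by simp
    next
      case False
      then have "F m T i = 4*m-1-i" using 1 l by (simp add: F_def)
      then show ?thesis using Y1[of i i "4*m-1-i"] 1 l False by simp
    qed
  next
    case 2
    then have l: "lev m i = 2*m-1-i" by (simp add: lev_def)
    show ?thesis
    proof (cases "T (2*m-1-i)")
      case True
      then have "F m T i = 2*m-1-i" using 2 l by (simp add: F_def)
      then show ?thesis using X1[of "2*m-1-i" "2*m-1-i" i] 2 l True by (simp add: insert_commute)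
    next
      case False
      then have "F m T i = 4*m-1-i" using 2 l by (simp add: F_def)
      then show ?thesis using Y2[of "2*m-1-i" i "4*m-1-i"] 2 l False by simp
    qed
  next
    case 3
    then have l: "lev m i = i - 2*m" by (simp add: lev_def)
    show ?thesis
    proof (cases "T (i-2*m)")
      case True
      then have "F m T i = 6*m-1-i" using 3 l by (simp add: F_def)
      then show ?thesis using X2[of "i-2*m" i "6*m-1-i"] 3 l True by simp
    next
      case False
      then have "F m T i = 4*m-1-i" using 3 l by (simp add: F_def)
      then show ?thesis using Y2[of "i-2*m" "4*m-1-i" i] 3 l False by (simp add: insert_commute)
    qed
  next
    case 4
    then have l: "lev m i = 4*m-1-i" using assms by (simp add: lev_def)
    show ?thesis
    proof (cases "T (4*m-1-i)")
      case True
      then have "F m T i = 6*m-1-i" using 4 l by (simp add: F_def)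
      then show ?thesis using X2[of "4*m-1-i" "6*m-1-i" i] 4 l True assms by (simp add: insert_commute)
    next
      case False
      then have "F m T i = 4*m-1-i" using 4 l by (simp add: F_def)
      then show ?thesis using Y1[of "4*m-1-i" "4*m-1-i" i] 4 l False assms by (simp add: insert_commute)
    qed
  qed
qed

lemma cyc_norm: "cyc a x b y \<Longrightarrow> {a, b} \<subseteq> {p, q} \<Longrightarrow> {x, y} \<subseteq> {r, s} \<Longrightarrow> p < q \<Longrightarrow> r < s \<Longrightarrow>
   (p < r \<and> r < q \<and> q < s) \<or> (r < p \<and> p < s \<and> s < q)"
  unfolding cyc_def by auto


definition ch :: "nat \<Rightarrow> (nat \<Rightarrow> bool) \<Rightarrow> nat \<Rightarrow> nat \<Rightarrow> nat \<Rightarrow> bool" where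
  "ch m T k p q \<longleftrightarrow> (T k \<and> p = k \<and> q + k + 1 = 2*m) \<or> (T k \<and> p = 2*m+k \<and> q + k + 1 = 4*m)
     \<or> (\<not> T k \<and> p = k \<and> q + k + 1 = 4*m) \<or> (\<not> T k \<and> p + k + 1 = 2*m \<and> q = 2*m+k)"

lemma chords':
  assumes "i < 4*m"
  obtains k p q where "k < m" "lev m i = k" "{i, F m T i} = {p, q}" "ch m T k p q" "p < q"
  using assms
proof (cases rule: chords[where T=T])
  case (X1 k p q) then show ?thesis using that[of k p q] by (simp add: ch_def)
next
  case (X2 k p q) then show ?thesis using that[of k p q] by (simp add: ch_def)
next
  case (Y1 k p q) then show ?thesis using that[of k p q] by (simp add: ch_def)
next
  case (Y2 k p q) then show ?thesis using that[of k p q] by (simp add: ch_def)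
qed

lemma key_abs: "k1 < m \<Longrightarrow> k2 < m \<Longrightarrow> ch m T k1 p1 q1 \<Longrightarrow> ch m T k2 p2 q2 \<Longrightarrow>
   (p1 < p2 \<and> p2 < q1 \<and> q1 < q2) \<or> (p2 < p1 \<and> p1 < q2 \<and> q2 < q1) \<Longrightarrow>
   (T k1 \<and> \<not> T k2 \<and> k1 < k2) \<or> (T k2 \<and> \<not> T k1 \<and> k2 < k1)"
  unfolding ch_def by (cases "T k1"; cases "T k2"; auto)

lemma key: assumes "i < 4*m" "j < 4*m" "a \<in> {i, F m T i}" "b \<in> {i, F m T i}"
   "x \<in> {j, F m T j}" "y \<in> {j, F m T j}" "cyc a x b y"
  shows "(T (lev m i) \<and> \<not> T (lev m j) \<and> lev m i < lev m j) \<or> (T (lev m j) \<and> \<not> T (lev m i) \<and> lev m j < lev m i)"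
proof -
  obtain k1 p1 q1 where 1: "k1 < m" "lev m i = k1" "{i, F m T i} = {p1, q1}" "ch m T k1 p1 q1" "p1 < q1"
    using chords'[OF assms(1)] by blast
  obtain k2 p2 q2 where 2: "k2 < m" "lev m j = k2" "{j, F m T j} = {p2, q2}" "ch m T k2 p2 q2" "p2 < q2"
    using chords'[OF assms(2)] by blast
  have "(p1 < p2 \<and> p2 < q1 \<and> q1 < q2) \<or> (p2 < p1 \<and> p1 < q2 \<and> q2 < q1)"
    by (rule cyc_norm[OF assms(7)]) (use assms(3-6) 1(3,5) 2(3,5) in auto)
  then show ?thesis unfolding 1(2) 2(2) using key_abs 1 2 by blast
qed


definition cc :: "nat \<Rightarrow> nat \<Rightarrow> bool" where
  "cc m i \<longleftrightarrow> i < m \<or> (2*m \<le> i \<and> i < 3*m)"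

lemma F_props:
  assumes "i < 4*m"
  shows "F m T i < 4*m \<and> F m T (F m T i) = i \<and> F m T i \<noteq> i \<and> cc m (F m T i) \<noteq> cc m i \<and> lev m (F m T i) = lev m i"
proof -
  consider "i < m" | "m \<le> i" "i < 2*m" | "2*m \<le> i" "i < 3*m" | "3*m \<le> i" using assms by linarith
  then show ?thesis
  proof cases
    case 1
    then have l: "lev m i = i" by (auto simp: lev_def)
    show ?thesis
    proof (cases "T i")
      case True
      then have f: "F m T i = 2*m-1-i" using 1 l by (auto simp: F_def)
      have l2: "lev m (2*m-1-i) = i" using 1 by (auto simp: lev_def)
      have "F m T (2*m-1-i) = i" using 1 l2 True by (auto simp: F_def)
      then show ?thesis using f l l2 1 by (auto simp: cc_def)
    next
      case False
      then have f: "F m T i = 4*m-1-i" using 1 l by (auto simp: F_def)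
      have l2: "lev m (4*m-1-i) = i" using 1 by (auto simp: lev_def)
      have "F m T (4*m-1-i) = i" using 1 l2 False by (auto simp: F_def)
      then show ?thesis using f l l2 1 by (auto simp: cc_def)
    qed
  next
    case 2
    then have l: "lev m i = 2*m-1-i" by (auto simp: lev_def)
    show ?thesis
    proof (cases "T (2*m-1-i)")
      case True
      then have f: "F m T i = 2*m-1-i" using 2 l by (auto simp: F_def)
      have l2: "lev m (2*m-1-i) = 2*m-1-i" using 2 by (auto simp: lev_def)
      have "F m T (2*m-1-i) = i" using 2 l2 True by (auto simp: F_def)
      then show ?thesis using f l l2 2 by (auto simp: cc_def)
    next
      case False
      then have f: "F m T i = 4*m-1-i" using 2 l by (auto simp: F_def)
      have l2: "lev m (4*m-1-i) = 2*m-1-i" using 2 by (auto simp: lev_def)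
      have "F m T (4*m-1-i) = i" using 2 l2 False by (auto simp: F_def)
      then show ?thesis using f l l2 2 by (auto simp: cc_def)
    qed
  next
    case 3
    then have l: "lev m i = i-2*m" by (auto simp: lev_def)
    show ?thesis
    proof (cases "T (i-2*m)")
      case True
      then have f: "F m T i = 6*m-1-i" using 3 l by (auto simp: F_def)
      have l2: "lev m (6*m-1-i) = i-2*m" using 3 by (auto simp: lev_def)
      have "F m T (6*m-1-i) = i" using 3 l2 True by (auto simp: F_def)
      then show ?thesis using f l l2 3 by (auto simp: cc_def)
    next
      case False
      then have f: "F m T i = 4*m-1-i" using 3 l by (auto simp: F_def)
      have l2: "lev m (4*m-1-i) = i-2*m" using 3 by (auto simp: lev_def)
      have "F m T (4*m-1-i) = i" using 3 l2 False by (auto simp: F_def)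
      then show ?thesis using f l l2 3 by (auto simp: cc_def)
    qed
  next
    case 4
    then have l: "lev m i = 4*m-1-i" using assms by (auto simp: lev_def)
    show ?thesis
    proof (cases "T (4*m-1-i)")
      case True
      then have f: "F m T i = 6*m-1-i" using 4 l assms by (auto simp: F_def)
      have l2: "lev m (6*m-1-i) = 4*m-1-i" using 4 assms by (auto simp: lev_def)
      have "F m T (6*m-1-i) = i" using 4 l2 True assms by (auto simp: F_def)
      then show ?thesis using f l l2 4 assms by (auto simp: cc_def)
    next
      case False
      then have f: "F m T i = 4*m-1-i" using 4 l by (auto simp: F_def)
      have l2: "lev m (4*m-1-i) = 4*m-1-i" using 4 assms by (auto simp: lev_def)
      have "F m T (4*m-1-i) = i" using 4 l2 False assms by (auto simp: F_def)
      then show ?thesis using f l l2 4 assms by (auto simp: cc_def)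
    qed
  qed
qed



definition hv :: "nat \<Rightarrow> nat \<Rightarrow> nat" where
  "hv m i = (if i \<le> m then i else if i \<le> 2*m then 2*m-i else if i \<le> 3*m then i-2*m else 4*m-i)"

lemma H_cc: "i \<le> 4*m \<Longrightarrow> H (cc m) i = int (hv m i)"
proof (induction i)
  case 0
  then show ?case by (simp add: H_def hv_def)
next
  case (Suc i)
  then have "H (cc m) i = int (hv m i)" by simp
  then show ?case using Suc.prems unfolding H_Suc hv_def cc_def by auto
qed

lemma lvl_cc: "i < 4*m \<Longrightarrow> lvl (cc m) i = int (lev m i)"
  unfolding lvl_def using H_cc[of i m] H_cc[of "Suc i" m] unfolding hv_def lev_def by auto

lemma good_F: "0 < m \<Longrightarrow> good (4*m) (cc m) (F m T)"
proof -
  assume m: "0 < m"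
  have "F m T i < 4*m \<and> F m T (F m T i) = i \<and> F m T i \<noteq> i \<and> cc m (F m T i) \<noteq> cc m i
        \<and> lvl (cc m) (F m T i) = lvl (cc m) i" if i: "i < 4*m" for i
    using F_props[OF i, of T] lvl_cc[OF i] lvl_cc[of "F m T i" m] by auto
  moreover have "H (cc m) (4*m) = 0" using H_cc[of "4*m" m] m unfolding hv_def by simp
  ultimately show ?thesis unfolding good_def by blast
qed


lemma exists_pos:
  assumes sg: "subsemigroup D" and dD: "d \<notin> D" and d0: "0 < d"
  shows "\<exists>p\<in>I_D D. \<exists>B\<in>blocks p. \<exists>B'\<in>blocks p. crossing p B B' \<and> dblk p B B' = d"
proof -
  define m where "m = Suc d"
  define T where "T = (\<lambda>k. k = 0 \<or> k \<in> D)"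
  have m0: "0 < m" by (simp add: m_def)
  have g: "good (4*m) (cc m) (F m T)" by (rule good_F[OF m0])
  have "\<forall>i<4*m. \<forall>j<4*m. (\<exists>a\<in>{i, F m T i}. \<exists>b\<in>{i, F m T i}. \<exists>x\<in>{j, F m T j}. \<exists>y\<in>{j, F m T j}. cyc a x b y)
        \<longrightarrow> nat \<bar>lvl (cc m) j - lvl (cc m) i\<bar> \<notin> D"
  proof (intro allI impI)
    fix i j assume ij: "i < 4*m" "j < 4*m" and
      ex: "\<exists>a\<in>{i, F m T i}. \<exists>b\<in>{i, F m T i}. \<exists>x\<in>{j, F m T j}. \<exists>y\<in>{j, F m T j}. cyc a x b y"
    have k: "(T (lev m i) \<and> \<not> T (lev m j) \<and> lev m i < lev m j) \<or> (T (lev m j) \<and> \<not> T (lev m i) \<and> lev m j < lev m i)"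
    proof -
      from ex obtain a b x y where "a \<in> {i, F m T i}" "b \<in> {i, F m T i}" "x \<in> {j, F m T j}" "y \<in> {j, F m T j}" "cyc a x b y"
        by blast
      then show ?thesis by (rule key[OF ij])
    qed
    have gen: "v \<notin> D" if "T u" "\<not> T (u + v)" for u v
    proof
      assume uv: "v \<in> D"
      show False
      proof (cases "u = 0")
        case True then show ?thesis using uv that(2) unfolding T_def by simp
      next
        case False then have "u \<in> D" using that(1) unfolding T_def by blast
        then have "u + v \<in> D" using uv sg unfolding subsemigroup_def by blast
        then show ?thesis using that(2) unfolding T_def by blast
      qed
    qed
    show "nat \<bar>lvl (cc m) j - lvl (cc m) i\<bar> \<notin> D"
      using k
    proof
      assume a: "T (lev m i) \<and> \<not> T (lev m j) \<and> lev m i < lev m j"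
      then have "nat \<bar>lvl (cc m) j - lvl (cc m) i\<bar> = lev m j - lev m i" using lvl_cc ij by simp
      moreover have "lev m j - lev m i \<notin> D" using gen[of "lev m i" "lev m j - lev m i"] a by simp
      ultimately show ?thesis by simp
    next
      assume a: "T (lev m j) \<and> \<not> T (lev m i) \<and> lev m j < lev m i"
      then have "nat \<bar>lvl (cc m) j - lvl (cc m) i\<bar> = lev m i - lev m j" using lvl_cc ij by simp
      moreover have "lev m i - lev m j \<notin> D" using gen[of "lev m j" "lev m i - lev m j"] a by simp
      ultimately show ?thesis by simp
    qed
  qed
  then have inI: "mkp (4*m) (cc m) (F m T) \<in> I_D D" by (rule good_ID[OF g])
  have l0: "lev m 0 = 0" and ld: "lev m d = d" using m0 by (simp_all add: lev_def m_def)
  have f0: "F m T 0 = 2*m-1" using l0 by (simp add: F_def T_def m_def)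
  have fd: "F m T d = 3*m" using ld dD d0 by (simp add: F_def T_def m_def)
  have cy: "cyc 0 d (F m T 0) (F m T d)" unfolding f0 fd cyc_def using d0 by (simp add: m_def)
  have i0: "0 < 4*m" and id: "d < 4*m" by (simp_all add: m_def)
  have cr: "crossing (mkp (4*m) (cc m) (F m T)) {Lo 0, Lo (F m T 0)} {Lo d, Lo (F m T d)}"
    by (rule cyc_crossing[OF g i0 id cy])
  have db: "dblk (mkp (4*m) (cc m) (F m T)) {Lo 0, Lo (F m T 0)} {Lo d, Lo (F m T d)} = d"
    using good_dblk[OF g i0 id] lvl_cc[OF i0] lvl_cc[OF id] l0 ld by simp
  have "{Lo 0, Lo (F m T 0)} \<in> blocks (mkp (4*m) (cc m) (F m T))" "{Lo d, Lo (F m T d)} \<in> blocks (mkp (4*m) (cc m) (F m T))"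
    using i0 id by (auto simp: blocks_mkp)
  then show ?thesis using inI cr db by blast
qed


lemma H_even: "H even i = (if even i then 0 else 1)"
  by (induction i) (simp_all add: H_Suc H_def)

lemma lvl_even: "lvl even i = 0"
  by (simp add: lvl_def H_even)

lemma good_six: "good 6 even (\<lambda>i. (i + 3) mod 6)"
proof -
  have "(i + 3) mod 6 < 6 \<and> ((i + 3) mod 6 + 3) mod 6 = i \<and> (i + 3) mod 6 \<noteq> i \<and> even ((i + 3) mod 6) \<noteq> even i"
    if "i < 6" for i :: nat
  proof -
    have "i = 0 \<or> i = 1 \<or> i = 2 \<or> i = 3 \<or> i = 4 \<or> i = 5" using that by auto
    then show ?thesis by auto
  qed
  then show ?thesis unfolding good_def by (simp add: lvl_even H_even)
qed

lemma exists_zero: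
  assumes "0 \<notin> D"
  shows "\<exists>p\<in>I_D D. \<exists>B\<in>blocks p. \<exists>B'\<in>blocks p. crossing p B B' \<and> dblk p B B' = 0"
proof -
  let ?f = "\<lambda>i::nat. (i + 3) mod 6"
  have inI: "mkp 6 even ?f \<in> I_D D"
    by (rule good_ID[OF good_six]) (simp add: lvl_even assms)
  have cy: "cyc 0 1 (?f 0) (?f 1)" by (simp add: cyc_def)
  have cr: "crossing (mkp 6 even ?f) {Lo 0, Lo (?f 0)} {Lo 1, Lo (?f 1)}"
    by (rule cyc_crossing[OF good_six _ _ cy]) simp_all
  have db: "dblk (mkp 6 even ?f) {Lo 0, Lo (?f 0)} {Lo 1, Lo (?f 1)} = 0"
    using good_dblk[OF good_six, of 0 1] by (simp add: lvl_even)
  have "{Lo 0, Lo (?f 0)} \<in> blocks (mkp 6 even ?f)" "{Lo 1, Lo (?f 1)} \<in> blocks (mkp 6 even ?f)"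
    unfolding blocks_mkp by (rule imageI, simp)+
  then show ?thesis using inI cr db by blast
qed

lemma distinct_aux:
  assumes "subsemigroup D1" "d \<notin> D1" "d \<in> D2"
  shows "I_D D1 \<noteq> I_D D2"
proof -
  have "\<exists>p\<in>I_D D1. \<exists>B\<in>blocks p. \<exists>B'\<in>blocks p. crossing p B B' \<and> dblk p B B' = d"
  proof (cases "d = 0")
    case True then show ?thesis using exists_zero assms(2) by simp
  next
    case False then show ?thesis using exists_pos assms(1,2) by simp
  qed
  then obtain p B B' where "p \<in> I_D D1" "B \<in> blocks p" "B' \<in> blocks p" "crossing p B B'" "dblk p B B' = d"
    by blast
  moreover then have "p \<notin> I_D D2" using assms(3) unfolding I_D_def by blast
  ultimately show ?thesis by blast
qed

theorem theorem1:
  assumes "subsemigroup D1" and "subsemigroup D2" and "I_D D1 = I_D D2"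
  shows "D1 = D2"
proof (rule ccontr)
  assume "D1 \<noteq> D2"
  then obtain d where "(d \<in> D2 \<and> d \<notin> D1) \<or> (d \<in> D1 \<and> d \<notin> D2)" by blast
  then show False using distinct_aux[OF assms(1)] distinct_aux[OF assms(2)] assms(3) by metis
qed

end
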